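(* For the SVIQS system, assume $\omega\ge\eta=\gamma$. If $R_0<1$, then the disease-free equilibrium $E^0$ is globally asymptotically stable: it is Lyapunov stable, and every solution with initial data satisfying $S_k(0),V_k(0),I_k(0),Q_k(0)\ge0$ and $S_k(0)+V_k(0)+I_k(0)+Q_k(0)=N_k^*$ for all $k$ converges to $E^0$ as $t\to\infty$.
   Context: Fix an integer $n\ge1$ and numbers $p(1),\dots,p(n)>0$ with $\sum_{k=1}^n p(k)=1$; set $\langle k\rangle=\sum_{k=1}^n kp(k)$. Fix constants $b>d>0$ and let $\Phi^*>0$ satisfy $\Phi^*=\frac{1}{\langle k\rangle}\sum_{i=1}^n \frac{i\,p(i)\,b\Phi^*}{d+bi\Phi^*}$. For $k=1,\dots,n$ put $N_k^*=\frac{bk\Phi^*}{d+bk\Phi^*}\in(0,1)$ and $\Lambda_k=bk(1-N_k^* )\Phi^*$ (so $\Lambda_k=dN_k^*>0$). Parameters: $\lambda(k)>0$, $\varphi(k)>0$, $\mu_k>0$ for $k=1,\dots,n$; constants $\beta,\gamma,\eta,\omega>0$ and $\delta\in[0,1]$. For functions $I_1(t),\dots,I_n(t)$ set $\Theta(t)=\frac{1}{\langle k\rangle}\sum_{i=1}^n\varphi(i)p(i)I_i(t)$. The SVIQS system is, for $k=1,\dots,n$: $S_k'=\Lambda_k-\lambda(k)S_k\Theta+\gamma I_k+\eta Q_k+\omega V_k-(\mu_k+d)S_k$, $V_k'=\mu_kS_k-\delta\lambda(k)V_k\Theta-(d+\omega)V_k$, $I_k'=\lambda(k)S_k\Theta+\delta\lambda(k)V_k\Theta-(\gamma+\beta+d)I_k$,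 $Q_k'=\beta I_k-(\eta+d)Q_k$. Its disease-free equilibrium $E^0$ is $S_k^0=\frac{(d+\omega)N_k^*}{\mu_k+\omega+d}$, $V_k^0=\frac{\mu_kN_k^*}{\mu_k+\omega+d}$, $I_k^0=Q_k^0=0$, and its basic reproduction number is $R_0=\frac{1}{\langle k\rangle}\sum_{i=1}^n\frac{\lambda(i)\varphi(i)p(i)\Lambda_i(\omega+d+\delta\mu_i)}{d(\gamma+\beta+d)(\omega+\mu_i+d)}$. *)

theory Defs
  imports "HOL-Analysis.Analysis"
begin

text \<open>Degree classes are indexed by k = 1..n; all functions below are of type nat => real.\<close>

definition avg_deg :: "nat \<Rightarrow> (nat \<Rightarrow> real) \<Rightarrow> real" where
  "avg_deg n p = (\<Sum>k=1..n. real k * p k)"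

definition Nstar :: "real \<Rightarrow> real \<Rightarrow> real \<Rightarrow> nat \<Rightarrow> real" where
  "Nstar b d Phi k = b * real k * Phi / (d + b * real k * Phi)"

definition Lam :: "real \<Rightarrow> real \<Rightarrow> real \<Rightarrow> nat \<Rightarrow> real" where
  "Lam b d Phi k = b * real k * (1 - Nstar b d Phi k) * Phi"

definition Theta :: "nat \<Rightarrow> (nat \<Rightarrow> real) \<Rightarrow> (nat \<Rightarrow> real) \<Rightarrow> (nat \<Rightarrow> real) \<Rightarrow> real" where
  "Theta n p phi I = (1 / avg_deg n p) * (\<Sum>i=1..n. phi i * p i * I i)"

definition R0 :: "nat \<Rightarrow> (nat \<Rightarrow> real) \<Rightarrow> real \<Rightarrow> real \<Rightarrow> real \<Rightarrow> (nat \<Rightarrow> real) \<Rightarrow>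
    (nat \<Rightarrow> real) \<Rightarrow> (nat \<Rightarrow> real) \<Rightarrow> real \<Rightarrow> real \<Rightarrow> real \<Rightarrow> real \<Rightarrow> real" where
  "R0 n p b d Phi lam phi mu beta gamma omega delta =
     (1 / avg_deg n p) * (\<Sum>i=1..n. lam i * phi i * p i * Lam b d Phi i * (omega + d + delta * mu i)
        / (d * (gamma + beta + d) * (omega + mu i + d)))"

definition S0 :: "real \<Rightarrow> real \<Rightarrow> real \<Rightarrow> (nat \<Rightarrow> real) \<Rightarrow> real \<Rightarrow> nat \<Rightarrow> real" where
  "S0 b d Phi mu omega k = (d + omega) * Nstar b d Phi k / (mu k + omega + d)"

definition V0 :: "real \<Rightarrow> real \<Rightarrow> real \<Rightarrow> (nat \<Rightarrow> real) \<Rightarrow> real \<Rightarrow> nat \<Rightarrow> real" where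
  "V0 b d Phi mu omega k = mu k * Nstar b d Phi k / (mu k + omega + d)"

definition sviqs_solution ::
  "nat \<Rightarrow> (nat \<Rightarrow> real) \<Rightarrow> real \<Rightarrow> real \<Rightarrow> real \<Rightarrow> (nat \<Rightarrow> real) \<Rightarrow> (nat \<Rightarrow> real) \<Rightarrow>
   (nat \<Rightarrow> real) \<Rightarrow> real \<Rightarrow> real \<Rightarrow> real \<Rightarrow> real \<Rightarrow> real \<Rightarrow>
   (real \<Rightarrow> nat \<Rightarrow> real) \<Rightarrow> (real \<Rightarrow> nat \<Rightarrow> real) \<Rightarrow> (real \<Rightarrow> nat \<Rightarrow> real) \<Rightarrow> (real \<Rightarrow> nat \<Rightarrow> real) \<Rightarrow> bool"
  where
  "sviqs_solution n p b d Phi lam phi mu beta gamma eta omega delta S V I Q \<longleftrightarrow>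
    (\<forall>t\<ge>0. \<forall>k\<in>{1..n}.
      ((\<lambda>s. S s k) has_real_derivative
         (Lam b d Phi k - lam k * S t k * Theta n p phi (I t) + gamma * I t k + eta * Q t k
          + omega * V t k - (mu k + d) * S t k)) (at t within {0..}) \<and>
      ((\<lambda>s. V s k) has_real_derivative
         (mu k * S t k - delta * lam k * V t k * Theta n p phi (I t) - (d + omega) * V t k))
         (at t within {0..}) \<and>
      ((\<lambda>s. I s k) has_real_derivative
         (lam k * S t k * Theta n p phi (I t) + delta * lam k * V t k * Theta n p phi (I t)
          - (gamma + beta + d) * I t k)) (at t within {0..}) \<and>
      ((\<lambda>s. Q s k) has_real_derivative (beta * I t k - (eta + d) * Q t k)) (at t within {0..}))"

definition sviqs_admissible ::
  "nat \<Rightarrow> (nat \<Rightarrow> real) \<Rightarrow> (nat \<Rightarrow> real) \<Rightarrow> (nat \<Rightarrow> real) \<Rightarrow> (nat \<Rightarrow> real) \<Rightarrow> (nat \<Rightarrow> real) \<Rightarrow> bool"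
  where
  "sviqs_admissible n Ns S V I Q \<longleftrightarrow>
    (\<forall>k\<in>{1..n}. S k \<ge> 0 \<and> V k \<ge> 0 \<and> I k \<ge> 0 \<and> Q k \<ge> 0 \<and> S k + V k + I k + Q k = Ns k)"

definition dist_dfe ::
  "nat \<Rightarrow> (nat \<Rightarrow> real) \<Rightarrow> (nat \<Rightarrow> real) \<Rightarrow> (nat \<Rightarrow> real) \<Rightarrow> (nat \<Rightarrow> real) \<Rightarrow> (nat \<Rightarrow> real) \<Rightarrow> (nat \<Rightarrow> real) \<Rightarrow> real"
  where
  "dist_dfe n S0v V0v S V I Q = (\<Sum>k=1..n. \<bar>S k - S0v k\<bar> + \<bar>V k - V0v k\<bar> + \<bar>I k\<bar> + \<bar>Q k\<bar>)"

end

theory Submission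
  imports Defs
begin

lemma lin_decay:
  fixes f f' :: "real \<Rightarrow> real"
  assumes k: "\<kappa> > 0" and T: "T \<ge> 0"
    and der: "\<And>t. t \<ge> T \<Longrightarrow> (f has_real_derivative f' t) (at t within {0..})"
    and ineq: "\<And>t. t \<ge> T \<Longrightarrow> f' t \<le> -\<kappa> * f t + B"
    and t: "t \<ge> T"
  shows "f t - B/\<kappa> \<le> (f T - B/\<kappa>) * exp (-\<kappa>*(t-T))"
proof -
  define w where "w s = (f s - B/\<kappa>) * exp (\<kappa>*(s - T))" for s
  define w' where "w' s = (f' s + \<kappa> * f s - B) * exp (\<kappa>*(s - T))" for s
  have dw: "(w has_real_derivative w' s) (at s within {T..t})" if "T \<le> s" "s \<le> t" for s
  proof -
    have d1: "(f has_real_derivative f' s) (at s within {T..t})"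
      by (rule DERIV_subset[OF der]) (use that T in auto)
    have "((\<lambda>s. (f s - B/\<kappa>) * exp (\<kappa>*(s - T))) has_real_derivative
        (f' s * exp (\<kappa>*(s - T)) + (f s - B/\<kappa>) * (exp (\<kappa>*(s - T)) * (\<kappa> * 1)))) (at s within {T..t})"
      by (rule derivative_eq_intros d1 refl | simp)+
    moreover have "f' s * exp (\<kappa>*(s - T)) + (f s - B/\<kappa>) * (exp (\<kappa>*(s - T)) * (\<kappa> * 1)) = w' s"
      using k by (simp add: w'_def field_simps)
    ultimately show ?thesis unfolding w_def by simp
  qed
  have w'n: "w' s \<le> 0" if "T \<le> s" for s
  proof -
    have "f' s + \<kappa> * f s - B \<le> 0" using ineq[of s] that by linarith
    thus ?thesis unfolding w'_def by (simp add: mult_nonpos_nonneg)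
  qed
  obtain x where x: "x \<in> {T..t}" "w t - w T = w' x * (t - T)"
    using mvt_very_simple[OF t, of w "\<lambda>x h. w' x * h"] dw
    by (auto simp: has_field_derivative_def)
  have "w' x * (t - T) \<le> 0" using x w'n[of x] t by (auto simp: mult_nonpos_nonneg)
  hence "w t \<le> w T" using x by linarith
  hence "(f t - B/\<kappa>) * exp (\<kappa>*(t - T)) \<le> f T - B/\<kappa>" by (simp add: w_def)
  hence "(f t - B/\<kappa>) * exp (\<kappa>*(t - T)) * exp (-\<kappa>*(t-T)) \<le> (f T - B/\<kappa>) * exp (-\<kappa>*(t-T))"
    by (simp add: mult_right_mono)
  thus ?thesis by (simp add: mult.assoc flip: exp_add)
qed

lemma lin_bound:
  fixes f f' :: "real \<Rightarrow> real"
  assumes k: "\<kappa> > 0" and T: "T \<ge> 0"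
    and der: "\<And>t. t \<ge> T \<Longrightarrow> (f has_real_derivative f' t) (at t within {0..})"
    and ineq: "\<And>t. t \<ge> T \<Longrightarrow> f' t \<le> -\<kappa> * f t + B"
    and t: "t \<ge> T"
  shows "f t \<le> max (f T) (B/\<kappa>)"
proof -
  have e: "f t - B/\<kappa> \<le> (f T - B/\<kappa>) * exp (-\<kappa>*(t-T))"
    by (rule lin_decay[OF k T der ineq t])
  have ex: "exp (-\<kappa>*(t-T)) \<le> 1" "exp (-\<kappa>*(t-T)) > 0" using k t by auto
  show ?thesis
  proof (cases "f T - B/\<kappa> \<ge> 0")
    case True
    hence "(f T - B/\<kappa>) * exp (-\<kappa>*(t-T)) \<le> f T - B/\<kappa>"
      using ex by (simp add: mult_left_le)
    thus ?thesis using e by linarith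
  next
    case False
    hence "(f T - B/\<kappa>) * exp (-\<kappa>*(t-T)) \<le> 0"
      using ex by (simp add: mult_nonpos_nonneg)
    thus ?thesis using e by linarith
  qed
qed

lemma limsup_decay:
  fixes f f' g :: "real \<Rightarrow> real"
  assumes k: "\<kappa> > 0"
    and der: "\<And>t. t \<ge> 0 \<Longrightarrow> (f has_real_derivative f' t) (at t within {0..})"
    and ev: "eventually (\<lambda>t. f' t \<le> -\<kappa> * f t + g t) at_top"
    and g: "\<And>e. e > 0 \<Longrightarrow> eventually (\<lambda>t. g t \<le> e) at_top"
    and e: "e > 0"
  shows "eventually (\<lambda>t. f t \<le> e) at_top"
proof -
  have "eventually (\<lambda>t. f' t \<le> -\<kappa> * f t + g t \<and> g t \<le> \<kappa> * e / 2) at_top"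
    using ev g[of "\<kappa> * e / 2"] k e by (auto intro: eventually_conj)
  then obtain N where N: "\<And>t. t \<ge> N \<Longrightarrow> f' t \<le> -\<kappa> * f t + g t \<and> g t \<le> \<kappa> * e / 2"
    by (auto simp: eventually_at_top_linorder)
  define T where "T = max N 0"
  have T: "T \<ge> 0" "T \<ge> N" by (auto simp: T_def)
  have dec: "f t - (\<kappa> * e / 2)/\<kappa> \<le> (f T - (\<kappa> * e / 2)/\<kappa>) * exp (-\<kappa>*(t-T))" if "t \<ge> T" for t
  proof (rule lin_decay[OF k T(1)])
    show "(f has_real_derivative f' t) (at t within {0..})" if "t \<ge> T" for t
      using der that T by auto
    show "f' t \<le> -\<kappa> * f t + \<kappa> * e / 2" if "t \<ge> T" for t
      using N[of t] that T by auto
  qed (use that in auto)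
  have ke: "(\<kappa> * e / 2)/\<kappa> = e/2" using k by simp
  define C where "C = \<bar>f T - e/2\<bar> + 1"
  have C: "C > 0" by (simp add: C_def add_pos_nonneg)
  define T' where "T' = max T (T + ln (2*C/e) / \<kappa>)"
  show ?thesis
    unfolding eventually_at_top_linorder
  proof (intro exI allI impI)
    fix t assume t: "t \<ge> T'"
    hence tT: "t \<ge> T" by (simp add: T'_def)
    have "ln (2*C/e) / \<kappa> \<le> t - T" using t by (simp add: T'_def)
    hence "ln (2*C/e) \<le> \<kappa> * (t - T)" using k by (simp add: divide_le_eq mult.commute)
    hence "-\<kappa>*(t-T) \<le> ln (e / (2*C))" using C e by (simp add: ln_div)
    hence "exp (-\<kappa>*(t-T)) \<le> exp (ln (e / (2*C)))" by simp
    also have "\<dots> = e / (2*C)" using C e by simp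
    finally have ex: "exp (-\<kappa>*(t-T)) \<le> e / (2*C)" .
    have "(f T - e/2) * exp (-\<kappa>*(t-T)) \<le> C * exp (-\<kappa>*(t-T))"
      by (intro mult_right_mono) (auto simp: C_def)
    also have "\<dots> \<le> C * (e / (2*C))" using ex C by (intro mult_left_mono) auto
    also have "\<dots> = e/2" using C by simp
    finally have "(f T - e/2) * exp (-\<kappa>*(t-T)) \<le> e/2" .
    moreover have "f t - e/2 \<le> (f T - e/2) * exp (-\<kappa>*(t-T))" using dec[OF tT] unfolding ke .
    ultimately show "f t \<le> e" by linarith
  qed
qed

lemma nonneg_barrier:
  fixes f f' :: "real \<Rightarrow> real"
  assumes a: "0 \<le> a" and ab: "a \<le> b"
    and der: "\<And>t. t \<in> {a..b} \<Longrightarrow> (f has_real_derivative f' t) (at t within {0..})"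
    and fa: "f a \<ge> 0"
    and neg: "\<And>t. t \<in> {a..b} \<Longrightarrow> f t < 0 \<Longrightarrow> f' t \<ge> M * f t"
  shows "f b \<ge> 0"
proof (rule ccontr)
  assume fb: "\<not> f b \<ge> 0"
  have der': "(f has_real_derivative f' t) (at t within {a..b})" if "t \<in> {a..b}" for t
    by (rule DERIV_subset[OF der[OF that]]) (use a in auto)
  have cont: "continuous_on {a..b} f" by (rule DERIV_continuous_on[OF der'])
  define A where "A = {a..b} \<inter> f -` {0..}"
  have clA: "closed A" unfolding A_def by (rule continuous_closed_preimage[OF cont]) auto
  have aA: "a \<in> A" using ab fa by (auto simp: A_def)
  have bddA: "bdd_above A" by (rule bdd_aboveI[of _ b]) (auto simp: A_def)
  define s where "s = Sup A"
  have sA: "s \<in> A" unfolding s_def using closed_contains_Sup[OF _ bddA clA] aA by auto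
  hence s: "a \<le> s" "s \<le> b" "f s \<ge> 0" by (auto simp: A_def)
  have sb: "s < b" using s fb by (cases "s = b") auto
  have negx: "f x < 0" if "s < x" "x \<le> b" for x
  proof (rule ccontr)
    assume "\<not> f x < 0"
    hence "x \<in> A" using that s by (auto simp: A_def)
    hence "x \<le> s" unfolding s_def by (rule cSup_upper[OF _ bddA])
    thus False using that by simp
  qed
  define w where "w x = f x * exp (-M*x)" for x
  have "w s \<le> w b"
  proof (rule DERIV_nonneg_imp_increasing_open[OF less_imp_le[OF sb]])
    fix x assume x: "s < x" "x < b"
    have dx: "(f has_real_derivative f' x) (at x)"
      using der'[of x] x s at_within_Icc_at[of a x b] by auto
    have "(w has_real_derivative (f' x * exp (-M*x) + f x * (exp (-M*x) * (-M * 1)))) (at x)"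
      unfolding w_def by (rule derivative_eq_intros dx refl | simp)+
    moreover have "f' x * exp (-M*x) + f x * (exp (-M*x) * (-M * 1)) = (f' x - M * f x) * exp (-M*x)"
      by (simp add: algebra_simps)
    moreover have "(f' x - M * f x) * exp (-M*x) \<ge> 0"
      using neg[of x] negx[of x] x s by auto
    ultimately show "\<exists>y. (w has_real_derivative y) (at x) \<and> y \<ge> 0" by auto
  next
    have "continuous_on {s..b} f" by (rule continuous_on_subset[OF cont]) (use s in auto)
    thus "continuous_on {s..b} w" unfolding w_def by (intro continuous_intros)
  qed
  moreover have "w s \<ge> 0" using s by (simp add: w_def)
  moreover have "w b < 0" using fb by (simp add: w_def mult_neg_pos)
  ultimately show False by simp
qed

locale params =
  fixes n :: nat and p :: "nat \<Rightarrow> real" and b d Phi :: real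
    and lam phi mu :: "nat \<Rightarrow> real" and beta gamma eta omega delta :: real
  assumes n: "n \<ge> 1"
    and p_pos: "\<forall>k\<in>{1..n}. p k > 0"
    and bd: "b > d" "d > 0"
    and Phi_pos: "Phi > 0"
    and lam_pos: "\<forall>k\<in>{1..n}. lam k > 0"
    and phi_pos: "\<forall>k\<in>{1..n}. phi k > 0"
    and mu_pos: "\<forall>k\<in>{1..n}. mu k > 0"
    and consts_pos: "beta > 0" "gamma > 0" "eta > 0" "omega > 0"
    and delta: "0 \<le> delta" "delta \<le> 1"
    and omega_eta: "omega \<ge> eta" and eta_gamma: "eta = gamma"
    and R0_lt: "R0 n p b d Phi lam phi mu beta gamma omega delta < 1"
begin

abbreviation "Nk \<equiv> Nstar b d Phi"
abbreviation "sig \<equiv> S0 b d Phi mu omega"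
abbreviation "nu \<equiv> V0 b d Phi mu omega"
abbreviation "c \<equiv> gamma + beta + d"
abbreviation "KK \<equiv> avg_deg n p"

lemma b_pos: "b > 0" using bd by simp

lemma KK_pos: "KK > 0"
  unfolding avg_deg_def
  by (rule sum_pos) (use n p_pos in auto)

lemma den_pos: "d + b * real k * Phi > 0"
  using bd Phi_pos by (simp add: add_pos_nonneg)

lemma N_nonneg: "Nk k \<ge> 0"
  using den_pos[of k] b_pos Phi_pos by (simp add: Nstar_def)

lemma N_pos: "k \<in> {1..n} \<Longrightarrow> Nk k > 0"
  using den_pos[of k] b_pos Phi_pos by (simp add: Nstar_def)

lemma Lam_eq: "Lam b d Phi k = d * Nk k"
proof -
  have "1 - Nk k = d / (d + b * real k * Phi)"
    using den_pos[of k] by (simp add: Nstar_def field_simps)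
  thus ?thesis by (simp add: Lam_def Nstar_def)
qed

lemma c_pos: "c > 0" using consts_pos bd by simp

lemma muk: "k \<in> {1..n} \<Longrightarrow> mu k > 0" using mu_pos by blast
lemma lamk: "k \<in> {1..n} \<Longrightarrow> lam k > 0" using lam_pos by blast
lemma phik: "k \<in> {1..n} \<Longrightarrow> phi k > 0" using phi_pos by blast
lemma pk: "k \<in> {1..n} \<Longrightarrow> p k > 0" using p_pos by blast

lemma mden: "k \<in> {1..n} \<Longrightarrow> mu k + omega + d > 0"
  using muk[of k] consts_pos bd by linarith

lemma sig_def': "sig k = (d + omega) * Nk k / (mu k + omega + d)" by (simp add: S0_def)
lemma nu_def': "nu k = mu k * Nk k / (mu k + omega + d)" by (simp add: V0_def)

lemma sig_nu: assumes "k \<in> {1..n}" shows "sig k + nu k = Nk k"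
proof -
  have m: "mu k + omega + d \<noteq> 0" using mden[OF assms] by simp
  have "sig k + nu k = ((d + omega) * Nk k + mu k * Nk k) / (mu k + omega + d)"
    unfolding sig_def' nu_def' by (simp add: add_divide_distrib)
  also have "\<dots> = Nk k * (mu k + omega + d) / (mu k + omega + d)" by (simp add: algebra_simps)
  also have "\<dots> = Nk k" using m by simp
  finally show ?thesis .
qed

lemma sig_pos: "k \<in> {1..n} \<Longrightarrow> sig k > 0"
  using mden[of k] N_pos[of k] consts_pos bd unfolding sig_def' by simp

lemma nu_pos: "k \<in> {1..n} \<Longrightarrow> nu k > 0"
  using mden[of k] N_pos[of k] muk[of k] unfolding nu_def' by simp

lemma dfe2: assumes "k \<in> {1..n}" shows "mu k * sig k = (d + omega) * nu k"
  unfolding sig_def' nu_def' by (simp add: algebra_simps)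

lemma dfe1: assumes k: "k \<in> {1..n}" shows
  "(mu k + d + gamma) * sig k - (omega - gamma) * nu k = Lam b d Phi k + gamma * Nk k"
proof -
  define m where "m = mu k + omega + d"
  have m: "m \<noteq> 0" using mden[OF k] by (simp add: m_def)
  have "(mu k + d + gamma) * sig k - (omega - gamma) * nu k
      = ((mu k + d + gamma) * (d + omega) - (omega - gamma) * mu k) * Nk k / m"
    unfolding sig_def' nu_def' m_def[symmetric] using m by (simp add: field_simps)
  also have "(mu k + d + gamma) * (d + omega) - (omega - gamma) * mu k = (d + gamma) * m"
    by (simp add: m_def algebra_simps)
  also have "(d + gamma) * m * Nk k / m = (d + gamma) * Nk k" using m by simp
  finally show ?thesis unfolding Lam_eq by (simp add: algebra_simps)
qed

definition "L0 = (1 / KK) * (\<Sum>i=1..n. lam i * phi i * p i * (sig i + delta * nu i))"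

lemma L0_eq: "L0 = c * R0 n p b d Phi lam phi mu beta gamma omega delta"
proof -
  have "(\<Sum>i=1..n. lam i * phi i * p i * Lam b d Phi i * (omega + d + delta * mu i)
        / (d * (gamma + beta + d) * (omega + mu i + d)))
     = (\<Sum>i=1..n. lam i * phi i * p i * (sig i + delta * nu i) / c)"
  proof (rule sum.cong[OF refl])
    fix i assume i: "i \<in> {1..n}"
    define m where "m = mu i + omega + d"
    have m: "m \<noteq> 0" using mden[OF i] by (simp add: m_def)
    have e1: "omega + mu i + d = m" by (simp add: m_def)
    have e2: "sig i + delta * nu i = (omega + d + delta * mu i) * Nk i / m"
      unfolding sig_def' nu_def' m_def[symmetric] using m by (simp add: field_simps)
    show "lam i * phi i * p i * Lam b d Phi i * (omega + d + delta * mu i)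
        / (d * (gamma + beta + d) * (omega + mu i + d)) = lam i * phi i * p i * (sig i + delta * nu i) / c"
    proof -
      have gen: "A * (d * N) * W / (d * cc * m) = A * (W * N / m) / cc" if "cc \<noteq> 0" for A N W cc
        using that m bd by (simp add: field_simps)
      have "lam i * phi i * p i * (d * Nk i) * (omega + d + delta * mu i) / (d * c * m)
         = lam i * phi i * p i * ((omega + d + delta * mu i) * Nk i / m) / c"
        by (rule gen) (use c_pos in simp)
      thus ?thesis unfolding e1 e2 Lam_eq .
    qed
  qed
  thus ?thesis unfolding L0_def R0_def using c_pos
    by (simp add: sum_divide_distrib[symmetric])
qed

lemma L0_lt: "L0 < c" using L0_eq R0_lt c_pos by simp

end


context params begin
definition "PP = (\<Sum>i=1..n. phi i * p i * lam i)"
lemma PP_pos: "PP > 0" unfolding PP_def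
  by (rule sum_pos) (use n phik pk lamk in auto)
definition "rho = (c - L0) / 2"
lemma rho_pos: "rho > 0" using L0_lt by (simp add: rho_def)

definition "LL = PP / KK"
definition "C1 = 1 + omega / d"
definition "Kth = (\<Sum>i=1..n. phi i * p i) / KK"
definition "Lsum = (\<Sum>i=1..n. lam i * Nk i)"
definition "Msum = (\<Sum>i=1..n. mu i)"
definition "CI = 1 + Lsum * Kth / c"
definition "CQ = 1 + beta * CI / d"
definition "C2 = 1 + (Msum * (CI + CQ) + Lsum * Kth) / d"
definition "Ctot = 2 * real n * (C2 + CI + CQ)"
definition "thr = rho / (LL * (C1 + 1))"

lemma LL_pos: "LL > 0" using PP_pos KK_pos by (simp add: LL_def)
lemma C1_ge: "C1 \<ge> 1" using consts_pos bd by (simp add: C1_def)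
lemma Kth_nonneg: "Kth \<ge> 0" unfolding Kth_def using KK_pos phik pk
  by (intro divide_nonneg_pos sum_nonneg) (auto simp: less_imp_le)
lemma Lsum_nonneg: "Lsum \<ge> 0" unfolding Lsum_def using lamk N_nonneg
  by (intro sum_nonneg) (auto simp: less_imp_le)
lemma Msum_nonneg: "Msum \<ge> 0" unfolding Msum_def using muk
  by (intro sum_nonneg) (auto simp: less_imp_le)
lemma lamN_le: "k \<in> {1..n} \<Longrightarrow> lam k * Nk k \<le> Lsum" unfolding Lsum_def
  by (rule member_le_sum) (use lamk N_nonneg in \<open>auto simp: less_imp_le\<close>)
lemma mu_le: "k \<in> {1..n} \<Longrightarrow> mu k \<le> Msum" unfolding Msum_def
  by (rule member_le_sum) (use muk in \<open>auto simp: less_imp_le\<close>)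
lemma CI_ge: "CI \<ge> 1" unfolding CI_def using Lsum_nonneg Kth_nonneg c_pos by simp
lemma CQ_ge: "CQ \<ge> 1" unfolding CQ_def using CI_ge consts_pos bd by simp
lemma C2_ge: "C2 \<ge> 1" unfolding C2_def using CI_ge CQ_ge Msum_nonneg Lsum_nonneg Kth_nonneg bd
  by (simp add: add_nonneg_nonneg)
lemma Ctot_nonneg: "Ctot \<ge> 0" unfolding Ctot_def using C2_ge CI_ge CQ_ge by simp
lemma thr_pos: "thr > 0" unfolding thr_def using rho_pos LL_pos C1_ge by simp

end

locale sol = params +
  fixes S V I Q :: "real \<Rightarrow> nat \<Rightarrow> real"
  assumes sol: "sviqs_solution n p b d Phi lam phi mu beta gamma eta omega delta S V I Q"
    and adm: "sviqs_admissible n (Nstar b d Phi) (S 0) (V 0) (I 0) (Q 0)"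
begin

abbreviation "Th t \<equiv> Theta n p phi (I t)"

definition "G t = (1 / KK) * (\<Sum>i=1..n. phi i * p i * lam i * (S t i + delta * V t i)) - c"

lemma dS: "t \<ge> 0 \<Longrightarrow> k \<in> {1..n} \<Longrightarrow> ((\<lambda>s. S s k) has_real_derivative
         (Lam b d Phi k - lam k * S t k * Th t + gamma * I t k + eta * Q t k
          + omega * V t k - (mu k + d) * S t k)) (at t within {0..})"
  using sol unfolding sviqs_solution_def by blast
lemma dV: "t \<ge> 0 \<Longrightarrow> k \<in> {1..n} \<Longrightarrow> ((\<lambda>s. V s k) has_real_derivative
         (mu k * S t k - delta * lam k * V t k * Th t - (d + omega) * V t k)) (at t within {0..})"
  using sol unfolding sviqs_solution_def by blast
lemma dI: "t \<ge> 0 \<Longrightarrow> k \<in> {1..n} \<Longrightarrow> ((\<lambda>s. I s k) has_real_derivative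
         (lam k * S t k * Th t + delta * lam k * V t k * Th t
          - (gamma + beta + d) * I t k)) (at t within {0..})"
  using sol unfolding sviqs_solution_def by blast
lemma dQ: "t \<ge> 0 \<Longrightarrow> k \<in> {1..n} \<Longrightarrow> ((\<lambda>s. Q s k) has_real_derivative
         (beta * I t k - (eta + d) * Q t k)) (at t within {0..})"
  using sol unfolding sviqs_solution_def by blast

lemma adm0: "k \<in> {1..n} \<Longrightarrow> S 0 k \<ge> 0 \<and> V 0 k \<ge> 0 \<and> I 0 k \<ge> 0 \<and> Q 0 k \<ge> 0
   \<and> S 0 k + V 0 k + I 0 k + Q 0 k = Nk k"
  using adm unfolding sviqs_admissible_def by blast

lemma cS: "k \<in> {1..n} \<Longrightarrow> continuous_on {0..} (\<lambda>t. S t k)"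
  by (rule DERIV_continuous_on[OF dS]) auto
lemma cV: "k \<in> {1..n} \<Longrightarrow> continuous_on {0..} (\<lambda>t. V t k)"
  by (rule DERIV_continuous_on[OF dV]) auto
lemma cI: "k \<in> {1..n} \<Longrightarrow> continuous_on {0..} (\<lambda>t. I t k)"
  by (rule DERIV_continuous_on[OF dI]) auto
lemma cQ: "k \<in> {1..n} \<Longrightarrow> continuous_on {0..} (\<lambda>t. Q t k)"
  by (rule DERIV_continuous_on[OF dQ]) auto

lemma Th_def': "Th t = (1 / KK) * (\<Sum>i=1..n. phi i * p i * I t i)"
  by (simp add: Theta_def)

lemma dTh: assumes t: "t \<ge> 0" shows "(Th has_real_derivative G t * Th t) (at t within {0..})"
proof -
  have "((\<lambda>s. (1 / KK) * (\<Sum>i=1..n. phi i * p i * I s i)) has_real_derivative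
     (1 / KK) * (\<Sum>i=1..n. phi i * p i * (lam i * S t i * Th t + delta * lam i * V t i * Th t
          - (gamma + beta + d) * I t i))) (at t within {0..})"
    by (intro DERIV_cmult DERIV_sum dI[OF t]) auto
  moreover have "(\<Sum>i=1..n. phi i * p i * (lam i * S t i * Th t + delta * lam i * V t i * Th t
          - (gamma + beta + d) * I t i))
    = (\<Sum>i=1..n. Th t * (phi i * p i * lam i * (S t i + delta * V t i)) - c * (phi i * p i * I t i))"
    by (rule sum.cong) (simp_all add: algebra_simps)
  moreover have "\<dots> = Th t * (\<Sum>i=1..n. phi i * p i * lam i * (S t i + delta * V t i))
       - c * (\<Sum>i=1..n. phi i * p i * I t i)"
    by (simp add: sum_subtractf sum_distrib_left)
  ultimately have "(Th has_real_derivative (1 / KK) * (Th t * (\<Sum>i=1..n. phi i * p i * lam i * (S t i + delta * V t i))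
       - c * (\<Sum>i=1..n. phi i * p i * I t i))) (at t within {0..})"
    unfolding Theta_def by simp
  moreover have "(1 / KK) * (Th t * (\<Sum>i=1..n. phi i * p i * lam i * (S t i + delta * V t i))
       - c * (\<Sum>i=1..n. phi i * p i * I t i)) = G t * Th t"
    unfolding G_def Th_def' using KK_pos by (simp add: field_simps)
  ultimately show ?thesis by simp
qed

lemma Th_nonneg: assumes t1: "t1 \<ge> 0" shows "Th t1 \<ge> 0"
proof -
  have "continuous_on {0..t1} G"
    unfolding G_def using KK_pos
    by (auto intro!: continuous_intros continuous_on_subset[OF cS] continuous_on_subset[OF cV])
  hence "compact (G ` {0..t1})" by (rule compact_continuous_image) simp
  hence "bounded (G ` {0..t1})" by (rule compact_imp_bounded)
  then obtain M where M: "\<And>t. t \<in> {0..t1} \<Longrightarrow> \<bar>G t\<bar> \<le> M"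
    unfolding bounded_iff by (metis image_eqI real_norm_def)
  show ?thesis
  proof (rule nonneg_barrier[of 0 t1 Th "\<lambda>t. G t * Th t" M])
    have "(\<Sum>i=1..n. phi i * p i * I 0 i) \<ge> 0"
    proof (rule sum_nonneg)
      fix i assume i: "i \<in> {1..n}"
      show "phi i * p i * I 0 i \<ge> 0" using adm0[OF i] phik[OF i] pk[OF i] by simp
    qed
    thus "0 \<le> Th 0" unfolding Th_def' using KK_pos by simp
  next
    fix t assume t: "t \<in> {0..t1}" "Th t < 0"
    have "G t \<le> M" using M[OF t(1)] by simp
    thus "M * Th t \<le> G t * Th t" using t(2) by (simp add: mult_right_mono_neg)
  qed (use t1 dTh in auto)
qed

lemma tot: assumes t: "t \<ge> 0" and k: "k \<in> {1..n}"
  shows "S t k + V t k + I t k + Q t k = Nk k"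
proof -
  define z where "z s = S s k + V s k + I s k + Q s k - Nk k" for s
  have dz: "(z has_real_derivative (-d * z s)) (at s within {0..})" if s: "s \<ge> 0" for s
  proof -
    have "(z has_real_derivative
        ((Lam b d Phi k - lam k * S s k * Th s + gamma * I s k + eta * Q s k
          + omega * V s k - (mu k + d) * S s k)
       + (mu k * S s k - delta * lam k * V s k * Th s - (d + omega) * V s k)
       + (lam k * S s k * Th s + delta * lam k * V s k * Th s - (gamma + beta + d) * I s k)
       + (beta * I s k - (eta + d) * Q s k) - 0)) (at s within {0..})"
      unfolding z_def by (intro DERIV_diff DERIV_add dS[OF s k] dV[OF s k] dI[OF s k] dQ[OF s k] DERIV_const)
    moreover have "(Lam b d Phi k - lam k * S s k * Th s + gamma * I s k + eta * Q s k
          + omega * V s k - (mu k + d) * S s k)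
       + (mu k * S s k - delta * lam k * V s k * Th s - (d + omega) * V s k)
       + (lam k * S s k * Th s + delta * lam k * V s k * Th s - (gamma + beta + d) * I s k)
       + (beta * I s k - (eta + d) * Q s k) - 0 = -d * z s"
      unfolding z_def Lam_eq by (simp add: algebra_simps)
    ultimately show ?thesis by simp
  qed
  have z0: "z 0 = 0" using adm0[OF k] by (simp add: z_def)
  have "z t - 0/d \<le> (z 0 - 0/d) * exp (-d*(t-0))"
    by (rule lin_decay[of d 0 z "\<lambda>s. -d * z s"]) (use bd dz t in auto)
  hence up: "z t \<le> 0" using z0 by simp
  have dz': "((\<lambda>s. - z s) has_real_derivative (-d * (- z s))) (at s within {0..})" if s: "s \<ge> 0" for s
    using DERIV_minus[OF dz[OF s]] by simp
  have "(- z t) - 0/d \<le> ((- z 0) - 0/d) * exp (-d*(t-0))"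
    by (rule lin_decay[of d 0 "\<lambda>s. - z s" "\<lambda>s. -d * (- z s)"]) (use bd dz' t in auto)
  hence "- z t \<le> 0" using z0 by simp
  with up have "z t = 0" by simp
  thus ?thesis by (simp add: z_def)
qed

lemma SV_nonneg: assumes k: "k \<in> {1..n}" shows "\<forall>t\<ge>0. S t k \<ge> 0 \<and> V t k \<ge> 0"
proof (rule ccontr)
  assume neg: "\<not> ?thesis"
  define B where "B = {t. t \<ge> 0 \<and> (S t k < 0 \<or> V t k < 0)}"
  have Bne: "B \<noteq> {}" using neg by (auto simp: B_def)
  have bddB: "bdd_below B" by (rule bdd_belowI[of _ 0]) (auto simp: B_def)
  define T where "T = Inf B"
  have T0: "T \<ge> 0" unfolding T_def by (rule cInf_greatest[OF Bne]) (auto simp: B_def)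
  have before: "S t k \<ge> 0 \<and> V t k \<ge> 0" if "0 \<le> t" "t < T" for t
  proof (rule ccontr)
    assume "\<not> (S t k \<ge> 0 \<and> V t k \<ge> 0)"
    hence "t \<in> B" using that by (auto simp: B_def)
    hence "T \<le> t" unfolding T_def by (rule cInf_lower[OF _ bddB])
    thus False using that by simp
  qed
  have atT: "S T k \<ge> 0 \<and> V T k \<ge> 0"
  proof (cases "T = 0")
    case True thus ?thesis using adm0[OF k] by simp
  next
    case False
    hence Tp: "T > 0" using T0 by simp
    have cl: "closure {0..<T} = {0..T}" using Tp by simp
    have "S T k \<ge> 0"
    proof (rule continuous_ge_on_closure[of "{0..<T}" "\<lambda>t. S t k"])
      show "continuous_on (closure {0..<T}) (\<lambda>t. S t k)"
        unfolding cl by (rule continuous_on_subset[OF cS[OF k]]) auto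
    qed (use cl before T0 in auto)
    moreover have "V T k \<ge> 0"
    proof (rule continuous_ge_on_closure[of "{0..<T}" "\<lambda>t. V t k"])
      show "continuous_on (closure {0..<T}) (\<lambda>t. V t k)"
        unfolding cl by (rule continuous_on_subset[OF cV[OF k]]) auto
    qed (use cl before T0 in auto)
    ultimately show ?thesis by simp
  qed
  obtain \<epsilon> where \<epsilon>: "\<epsilon> > 0" "\<And>t. T < t \<Longrightarrow> t < T + \<epsilon> \<Longrightarrow> S t k > 0"
  proof (cases "S T k > 0")
    case True
    have "continuous (at T within {0..}) (\<lambda>t. S t k)"
      using cS[OF k] T0 by (simp add: continuous_on_eq_continuous_within)
    hence "((\<lambda>t. S t k) \<longlongrightarrow> S T k) (at T within {0..})"
      by (simp add: continuous_within)
    hence "eventually (\<lambda>t. S t k > 0) (at T within {0..})"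
      using True by (rule order_tendstoD(1))
    then obtain e where e: "e > 0" "\<And>x. x \<in> {0..} \<Longrightarrow> x \<noteq> T \<Longrightarrow> dist x T < e \<Longrightarrow> S x k > 0"
      unfolding eventually_at by blast
    show ?thesis
    proof (rule that[OF e(1)])
      fix t assume "T < t" "t < T + e"
      thus "S t k > 0" using e(2)[of t] T0 by (auto simp: dist_real_def)
    qed
  next
    case False
    hence ST: "S T k = 0" using atT by simp
    have IQ: "I T k + Q T k = Nk k - V T k" using tot[OF T0 k] ST by simp
    have val: "Lam b d Phi k - lam k * S T k * Th T + gamma * I T k + eta * Q T k
          + omega * V T k - (mu k + d) * S T k = Lam b d Phi k + gamma * Nk k + (omega - gamma) * V T k"
    proof -
      have "gamma * I T k + eta * Q T k = gamma * (I T k + Q T k)"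
        using eta_gamma by (simp add: distrib_left)
      hence "gamma * I T k + eta * Q T k = gamma * (Nk k - V T k)" unfolding IQ .
      thus ?thesis using ST by (simp add: algebra_simps)
    qed
    have pos: "Lam b d Phi k + gamma * Nk k + (omega - gamma) * V T k > 0"
    proof -
      have "Lam b d Phi k > 0" unfolding Lam_eq using bd N_pos[OF k] by simp
      moreover have "gamma * Nk k \<ge> 0" using consts_pos N_nonneg by simp
      moreover have "(omega - gamma) * V T k \<ge> 0" using omega_eta eta_gamma atT by simp
      ultimately show ?thesis by linarith
    qed
    obtain e where e: "e > 0" "\<And>h. h > 0 \<Longrightarrow> T + h \<in> {0..} \<Longrightarrow> h < e \<Longrightarrow> S T k < S (T + h) k"
      using has_real_derivative_pos_inc_right[OF dS[OF T0 k], unfolded val, OF pos] by blast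
    show ?thesis
    proof (rule that[OF e(1)])
      fix t assume t: "T < t" "t < T + e"
      have "S T k < S (T + (t - T)) k" using e(2)[of "t - T"] t T0 by auto
      thus "S t k > 0" using ST by simp
    qed
  qed
  have after: "S t k \<ge> 0 \<and> V t k \<ge> 0" if t: "T \<le> t" "t < T + \<epsilon>" for t
  proof -
    have Sge: "S s k \<ge> 0" if "T \<le> s" "s < T + \<epsilon>" for s
      using that atT \<epsilon>(2)[of s] by (cases "s = T") auto
    have "V t k \<ge> 0"
    proof (rule nonneg_barrier[of T t "\<lambda>s. V s k"
          "\<lambda>s. mu k * S s k - delta * lam k * V s k * Th s - (d + omega) * V s k" 0])
      fix s assume s: "s \<in> {T..t}" "V s k < 0"
      have "S s k \<ge> 0" using Sge s t by auto
      hence a1: "mu k * S s k \<ge> 0" using muk[OF k] by simp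
      have "delta * lam k * Th s \<ge> 0" using delta lamk[OF k] Th_nonneg[of s] s T0 by simp
      hence a2: "(delta * lam k * Th s) * V s k \<le> 0" using s by (simp add: mult_nonneg_nonpos)
      have a3: "(d + omega) * V s k \<le> 0" proof -
        have "d + omega > 0" using bd consts_pos by simp
        thus ?thesis using s(2) by (intro less_imp_le mult_pos_neg)
      qed
      show "0 * V s k \<le> mu k * S s k - delta * lam k * V s k * Th s - (d + omega) * V s k"
        using a1 a2 a3 by (simp add: algebra_simps)
    qed (use T0 t atT dV[OF _ k] in auto)
    thus ?thesis using Sge t by simp
  qed
  have "T + \<epsilon> \<le> T" unfolding T_def
  proof (rule cInf_greatest[OF Bne])
    fix x assume x: "x \<in> B"
    show "Inf B + \<epsilon> \<le> x"
    proof (rule ccontr)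
      assume "\<not> Inf B + \<epsilon> \<le> x"
      hence "x < T + \<epsilon>" by (simp add: T_def)
      moreover have "x \<ge> 0" "S x k < 0 \<or> V x k < 0" using x by (auto simp: B_def)
      ultimately show False
      proof (cases "x < T")
        case True thus False using before[of x] \<open>x \<ge> 0\<close> \<open>S x k < 0 \<or> V x k < 0\<close> by linarith
      next
        case False thus False using after[of x] \<open>x < T + \<epsilon>\<close> \<open>S x k < 0 \<or> V x k < 0\<close> by linarith
      qed
    qed
  qed
  thus False using \<epsilon> by simp
qed

lemma S_nonneg: "t \<ge> 0 \<Longrightarrow> k \<in> {1..n} \<Longrightarrow> S t k \<ge> 0" using SV_nonneg by blast
lemma V_nonneg: "t \<ge> 0 \<Longrightarrow> k \<in> {1..n} \<Longrightarrow> V t k \<ge> 0" using SV_nonneg by blast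

lemma I_nonneg: assumes t: "t \<ge> 0" and k: "k \<in> {1..n}" shows "I t k \<ge> 0"
proof (rule nonneg_barrier[of 0 t "\<lambda>s. I s k" _ "- c"])
  fix s assume s: "s \<in> {0..t}" "I s k < 0"
  have "lam k * S s k * Th s \<ge> 0" using lamk[OF k] S_nonneg[OF _ k, of s] Th_nonneg[of s] s by simp
  moreover have "delta * lam k * V s k * Th s \<ge> 0"
    using delta lamk[OF k] V_nonneg[OF _ k, of s] Th_nonneg[of s] s by simp
  ultimately show "- c * I s k \<le> lam k * S s k * Th s + delta * lam k * V s k * Th s - (gamma + beta + d) * I s k"
    by (simp add: algebra_simps)
qed (use t adm0[OF k] dI[OF _ k] in auto)

lemma Q_nonneg: assumes t: "t \<ge> 0" and k: "k \<in> {1..n}" shows "Q t k \<ge> 0"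
proof (rule nonneg_barrier[of 0 t "\<lambda>s. Q s k" _ "- (eta + d)"])
  fix s assume s: "s \<in> {0..t}" "Q s k < 0"
  have "beta * I s k \<ge> 0" using consts_pos I_nonneg[OF _ k, of s] s by simp
  thus "- (eta + d) * Q s k \<le> beta * I s k - (eta + d) * Q s k" by (simp add: algebra_simps)
qed (use t adm0[OF k] dQ[OF _ k] in auto)

lemma dy: assumes t: "t \<ge> 0" and k: "k \<in> {1..n}"
  shows "((\<lambda>s. V s k - nu k) has_real_derivative
     (-(mu k + d + omega) * (V t k - nu k) - (mu k * (I t k + Q t k) + delta * lam k * Th t * V t k)))
     (at t within {0..})"
proof -
  have "((\<lambda>s. V s k - nu k) has_real_derivative
         (mu k * S t k - delta * lam k * V t k * Th t - (d + omega) * V t k - 0)) (at t within {0..})"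
    by (intro DERIV_diff dV[OF t k] DERIV_const)
  moreover have H2: "mu k * S t k - delta * lam k * V t k * Th t - (d + omega) * V t k - 0
     = -(mu k + d + omega) * (V t k - nu k) - (mu k * (I t k + Q t k) + delta * lam k * Th t * V t k)"
  proof -
    have e1: "I t k + Q t k = Nk k - S t k - V t k" using tot[OF t k] by linarith
    have e2: "mu k * sig k = (d + omega) * nu k" by (rule dfe2[OF k])
    have e3: "mu k * Nk k = mu k * sig k + mu k * nu k" using sig_nu[OF k] by (metis distrib_left)
    have e4: "mu k * (I t k + Q t k) = mu k * Nk k - mu k * S t k - mu k * V t k"
      unfolding e1 by (simp add: algebra_simps)
    have e5: "(d + omega) * nu k = d * nu k + omega * nu k" by (simp add: algebra_simps)
    show ?thesis unfolding e4 using e2 e3 e5 by (simp add: algebra_simps)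
  qed
  ultimately show ?thesis by (simp only: H2)
qed

lemma dx: assumes t: "t \<ge> 0" and k: "k \<in> {1..n}"
  shows "((\<lambda>s. S s k - sig k) has_real_derivative
     (-(mu k + d + gamma) * (S t k - sig k) + (omega - gamma) * (V t k - nu k) - lam k * S t k * Th t))
     (at t within {0..})"
proof -
  have "((\<lambda>s. S s k - sig k) has_real_derivative
         (Lam b d Phi k - lam k * S t k * Th t + gamma * I t k + eta * Q t k
          + omega * V t k - (mu k + d) * S t k - 0)) (at t within {0..})"
    by (intro DERIV_diff dS[OF t k] DERIV_const)
  moreover have H2: "Lam b d Phi k - lam k * S t k * Th t + gamma * I t k + eta * Q t k
          + omega * V t k - (mu k + d) * S t k - 0
     = -(mu k + d + gamma) * (S t k - sig k) + (omega - gamma) * (V t k - nu k) - lam k * S t k * Th t"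
  proof -
    have e1: "I t k + Q t k = Nk k - S t k - V t k" using tot[OF t k] by linarith
    have e4: "gamma * I t k + eta * Q t k = gamma * Nk k - gamma * S t k - gamma * V t k"
    proof -
      have "gamma * I t k + eta * Q t k = gamma * (I t k + Q t k)" using eta_gamma by (simp add: distrib_left)
      thus ?thesis unfolding e1 by (simp add: algebra_simps)
    qed
    have e2: "(mu k + d + gamma) * sig k - (omega - gamma) * nu k = Lam b d Phi k + gamma * Nk k"
      by (rule dfe1[OF k])
    have "Lam b d Phi k - lam k * S t k * Th t + gamma * I t k + eta * Q t k
          + omega * V t k - (mu k + d) * S t k - 0
       = Lam b d Phi k + gamma * Nk k - (mu k + d + gamma) * S t k + (omega - gamma) * V t k - lam k * S t k * Th t"
      using e4 by (simp add: algebra_simps)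
    also have "\<dots> = -(mu k + d + gamma) * (S t k - sig k) + (omega - gamma) * (V t k - nu k) - lam k * S t k * Th t"
      unfolding e2[symmetric] by (simp add: algebra_simps)
    finally show ?thesis .
  qed
  ultimately show ?thesis by (simp only: H2)
qed

lemma SdV_le: assumes t: "t \<ge> 0" and k: "k \<in> {1..n}" shows "S t k + delta * V t k \<le> Nk k"
proof -
  have "delta * V t k \<le> V t k" using delta V_nonneg[OF t k] by (simp add: mult_left_le_one_le)
  thus ?thesis using tot[OF t k] I_nonneg[OF t k] Q_nonneg[OF t k] by linarith
qed

lemma V_le: assumes t: "t \<ge> 0" and k: "k \<in> {1..n}" shows "V t k \<le> Nk k"
  using tot[OF t k] I_nonneg[OF t k] Q_nonneg[OF t k] S_nonneg[OF t k] by linarith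

lemma forcing_y_nonneg: assumes t: "t \<ge> 0" and k: "k \<in> {1..n}"
  shows "mu k * (I t k + Q t k) + delta * lam k * Th t * V t k \<ge> 0"
  using muk[OF k] I_nonneg[OF t k] Q_nonneg[OF t k] delta lamk[OF k] Th_nonneg[OF t] V_nonneg[OF t k]
  by simp

lemma forcing_y_le: assumes t: "t \<ge> 0" and k: "k \<in> {1..n}"
  shows "mu k * (I t k + Q t k) + delta * lam k * Th t * V t k \<le> mu k * (I t k + Q t k) + lam k * Nk k * Th t"
proof -
  have "delta * (lam k * Th t) * V t k \<le> 1 * (lam k * Th t) * Nk k"
    using delta lamk[OF k] Th_nonneg[OF t] V_nonneg[OF t k] V_le[OF t k]
    by (intro mult_mono) (auto simp: mult_nonneg_nonneg)
  thus ?thesis by (simp add: algebra_simps)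
qed

lemma ev_ge0: "eventually (\<lambda>t. t \<ge> (0::real)) at_top" by (rule eventually_ge_at_top)

lemma y_limsup: assumes k: "k \<in> {1..n}" and e: "e > 0"
  shows "eventually (\<lambda>t. V t k - nu k \<le> e) at_top"
proof (rule limsup_decay[of "mu k + d + omega" _ _ "\<lambda>t. 0"])
  show "mu k + d + omega > 0" using mden[OF k] by simp
  show "eventually (\<lambda>t. -(mu k + d + omega) * (V t k - nu k) - (mu k * (I t k + Q t k) + delta * lam k * Th t * V t k)
     \<le> -(mu k + d + omega) * (V t k - nu k) + 0) at_top"
    using ev_ge0 by eventually_elim (use forcing_y_nonneg[OF _ k] in force)
qed (use dy k e in auto)

lemma x_limsup: assumes k: "k \<in> {1..n}" and e: "e > 0"
  shows "eventually (\<lambda>t. S t k - sig k \<le> e) at_top"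
proof (rule limsup_decay[of "mu k + d + gamma" _ _ "\<lambda>t. (omega - gamma) * (V t k - nu k)"])
  show "mu k + d + gamma > 0" using muk[OF k] bd consts_pos by simp
  show "eventually (\<lambda>t. -(mu k + d + gamma) * (S t k - sig k) + (omega - gamma) * (V t k - nu k) - lam k * S t k * Th t
     \<le> -(mu k + d + gamma) * (S t k - sig k) + (omega - gamma) * (V t k - nu k)) at_top"
    using ev_ge0 by eventually_elim (use lamk[OF k] S_nonneg[OF _ k] Th_nonneg in auto)
next
  fix e :: real assume e: "e > 0"
  have w: "omega - gamma \<ge> 0" using omega_eta eta_gamma by simp
  have "eventually (\<lambda>t. V t k - nu k \<le> e / (omega - gamma + 1)) at_top"
    by (rule y_limsup[OF k]) (use e w in simp)
  thus "eventually (\<lambda>t. (omega - gamma) * (V t k - nu k) \<le> e) at_top"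
  proof eventually_elim
    case (elim t)
    have "(omega - gamma) * (V t k - nu k) \<le> (omega - gamma) * (e / (omega - gamma + 1))"
      using elim w by (rule mult_left_mono)
    also have "\<dots> \<le> e" using w e by (simp add: field_simps)
    finally show ?case .
  qed
qed (use dx k e in auto)


lemma G_decomp: "G t = (L0 - c) + (1 / KK) * (\<Sum>i=1..n. phi i * p i * lam i * ((S t i - sig i) + delta * (V t i - nu i)))"
proof -
  have "(\<Sum>i=1..n. phi i * p i * lam i * (S t i + delta * V t i))
      = (\<Sum>i=1..n. lam i * phi i * p i * (sig i + delta * nu i) + phi i * p i * lam i * ((S t i - sig i) + delta * (V t i - nu i)))"
    by (rule sum.cong) (simp_all add: algebra_simps)
  also have "\<dots> = (\<Sum>i=1..n. lam i * phi i * p i * (sig i + delta * nu i)) + (\<Sum>i=1..n. phi i * p i * lam i * ((S t i - sig i) + delta * (V t i - nu i)))"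
    by (rule sum.distrib)
  finally show ?thesis unfolding G_def L0_def by (simp add: algebra_simps)
qed


lemma G_ev: "eventually (\<lambda>t. G t \<le> - rho) at_top"
proof -
  define e' where "e' = rho * KK / (2 * PP)"
  have e'p: "e' > 0" using rho_pos KK_pos PP_pos by (simp add: e'_def)
  have "eventually (\<lambda>t. \<forall>i\<in>{1..n}. S t i - sig i \<le> e' \<and> V t i - nu i \<le> e') at_top"
    by (rule eventually_ball_finite) (auto intro!: eventually_conj x_limsup y_limsup e'p)
  thus ?thesis
  proof eventually_elim
    case (elim t)
    have "(\<Sum>i=1..n. phi i * p i * lam i * ((S t i - sig i) + delta * (V t i - nu i)))
        \<le> (\<Sum>i=1..n. phi i * p i * lam i * (2 * e'))"
    proof (rule sum_mono)
      fix i assume i: "i \<in> {1..n}"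
      have "delta * (V t i - nu i) \<le> e'"
      proof (cases "V t i - nu i \<ge> 0")
        case True
        hence "delta * (V t i - nu i) \<le> (V t i - nu i)" using mult_right_mono[of delta 1 "V t i - nu i"] delta by simp
        moreover have "V t i - nu i \<le> e'" using elim i by blast
        ultimately show ?thesis by linarith
      next
        case False
        hence "delta * (V t i - nu i) \<le> 0" using delta by (simp add: mult_nonneg_nonpos)
        thus ?thesis using e'p by simp
      qed
      moreover have "S t i - sig i \<le> e'" using elim i by blast
      ultimately have "(S t i - sig i) + delta * (V t i - nu i) \<le> 2 * e'" by linarith
      moreover have "phi i * p i * lam i \<ge> 0" using phik[OF i] pk[OF i] lamk[OF i] by simp
      ultimately show "phi i * p i * lam i * ((S t i - sig i) + delta * (V t i - nu i)) \<le> phi i * p i * lam i * (2 * e')"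
        by (rule mult_left_mono)
    qed
    also have "\<dots> = (\<Sum>i=1..n. phi i * p i * lam i) * (2 * e')" by (rule sum_distrib_right[symmetric])
    also have "\<dots> = 2 * e' * PP" unfolding PP_def by simp
    finally have "(1 / KK) * (\<Sum>i=1..n. phi i * p i * lam i * ((S t i - sig i) + delta * (V t i - nu i)))
        \<le> (1 / KK) * (2 * e' * PP)" using KK_pos by (intro mult_left_mono) auto
    also have "(1 / KK) * (2 * e' * PP) = rho" using KK_pos PP_pos by (simp add: e'_def)
    finally have X: "(1 / KK) * (\<Sum>i=1..n. phi i * p i * lam i * ((S t i - sig i) + delta * (V t i - nu i))) \<le> rho" .
    have "G t \<le> L0 - c + rho" unfolding G_decomp using X by (rule add_left_mono)
    also have "L0 - c + rho = - rho" by (simp add: rho_def field_simps)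
    finally show ?case .
  qed
qed

lemma Th_limsup: assumes e: "e > 0" shows "eventually (\<lambda>t. Th t \<le> e) at_top"
proof (rule limsup_decay[of rho _ "\<lambda>t. G t * Th t" "\<lambda>t. 0"])
  show "eventually (\<lambda>t. G t * Th t \<le> - rho * Th t + 0) at_top"
    using G_ev ev_ge0
  proof eventually_elim
    case (elim t)
    have "G t * Th t \<le> (- rho) * Th t" using elim Th_nonneg[of t] by (intro mult_right_mono) auto
    thus ?case by simp
  qed
qed (use rho_pos dTh e in auto)

lemma I_limsup: assumes k: "k \<in> {1..n}" and e: "e > 0"
  shows "eventually (\<lambda>t. I t k \<le> e) at_top"
proof (rule limsup_decay[of c _ _ "\<lambda>t. lam k * Nk k * Th t"])
  show "eventually (\<lambda>t. lam k * S t k * Th t + delta * lam k * V t k * Th t - (gamma + beta + d) * I t k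
     \<le> - c * I t k + lam k * Nk k * Th t) at_top"
    using ev_ge0
  proof eventually_elim
    case (elim t)
    have "(lam k * Th t) * (S t k + delta * V t k) \<le> (lam k * Th t) * Nk k"
      using SdV_le[OF elim k] lamk[OF k] Th_nonneg[OF elim] by (intro mult_left_mono) auto
    thus ?case by (simp add: algebra_simps)
  qed
next
  fix e :: real assume e: "e > 0"
  have ln: "lam k * Nk k > 0" using lamk[OF k] N_pos[OF k] by simp
  have "eventually (\<lambda>t. Th t \<le> e / (lam k * Nk k)) at_top" by (rule Th_limsup) (use e ln in simp)
  thus "eventually (\<lambda>t. lam k * Nk k * Th t \<le> e) at_top"
    by eventually_elim (use ln in \<open>simp add: field_simps mult.commute\<close>)
qed (use c_pos dI k e in auto)

lemma Q_limsup: assumes k: "k \<in> {1..n}" and e: "e > 0"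
  shows "eventually (\<lambda>t. Q t k \<le> e) at_top"
proof (rule limsup_decay[of "eta + d" _ _ "\<lambda>t. beta * I t k"])
  show "eventually (\<lambda>t. beta * I t k - (eta + d) * Q t k \<le> - (eta + d) * Q t k + beta * I t k) at_top"
    by (intro always_eventually allI) (simp add: algebra_simps)
next
  fix e :: real assume e: "e > 0"
  have "eventually (\<lambda>t. I t k \<le> e / beta) at_top" by (rule I_limsup[OF k]) (use e consts_pos in simp)
  thus "eventually (\<lambda>t. beta * I t k \<le> e) at_top"
    by eventually_elim (use consts_pos in \<open>simp add: field_simps mult.commute\<close>)
qed (use consts_pos bd dQ k e in auto)

lemma ny_limsup: assumes k: "k \<in> {1..n}" and e: "e > 0"
  shows "eventually (\<lambda>t. - (V t k - nu k) \<le> e) at_top"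
proof (rule limsup_decay[of "mu k + d + omega" _
    "\<lambda>t. - (-(mu k + d + omega) * (V t k - nu k) - (mu k * (I t k + Q t k) + delta * lam k * Th t * V t k))"
    "\<lambda>t. mu k * (I t k + Q t k) + lam k * Nk k * Th t"])
  show "mu k + d + omega > 0" using mden[OF k] by simp
  show "eventually (\<lambda>t. - (-(mu k + d + omega) * (V t k - nu k) - (mu k * (I t k + Q t k) + delta * lam k * Th t * V t k))
     \<le> - (mu k + d + omega) * (- (V t k - nu k)) + (mu k * (I t k + Q t k) + lam k * Nk k * Th t)) at_top"
    using ev_ge0
  proof eventually_elim
    case (elim t)
    have F: "mu k * (I t k + Q t k) + delta * lam k * Th t * V t k \<le> mu k * (I t k + Q t k) + lam k * Nk k * Th t"
      by (rule forcing_y_le[OF elim k])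
    have "- (-(mu k + d + omega) * (V t k - nu k) - (mu k * (I t k + Q t k) + delta * lam k * Th t * V t k))
      = (mu k + d + omega) * (V t k - nu k) + (mu k * (I t k + Q t k) + delta * lam k * Th t * V t k)" by (simp add: algebra_simps)
    moreover have "- (mu k + d + omega) * (- (V t k - nu k)) + (mu k * (I t k + Q t k) + lam k * Nk k * Th t)
      = (mu k + d + omega) * (V t k - nu k) + (mu k * (I t k + Q t k) + lam k * Nk k * Th t)" by (simp add: algebra_simps)
    ultimately show ?case using F by linarith
  qed
next
  fix e :: real assume e: "e > 0"
  define e1 where "e1 = e / (2 * mu k + lam k * Nk k + 1)"
  have m: "2 * mu k + lam k * Nk k + 1 > 0" using muk[OF k] lamk[OF k] N_pos[OF k] by (simp add: add_pos_nonneg)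
  have e1: "e1 > 0" using e m by (simp add: e1_def)
  have "eventually (\<lambda>t. I t k \<le> e1 \<and> Q t k \<le> e1 \<and> Th t \<le> e1) at_top"
    using I_limsup[OF k e1] Q_limsup[OF k e1] Th_limsup[OF e1] by (auto intro: eventually_conj)
  thus "eventually (\<lambda>t. mu k * (I t k + Q t k) + lam k * Nk k * Th t \<le> e) at_top"
  proof eventually_elim
    case (elim t)
    have "mu k * (I t k + Q t k) \<le> mu k * (2 * e1)" using elim muk[OF k] by (intro mult_left_mono) auto
    moreover have "lam k * Nk k * Th t \<le> lam k * Nk k * e1"
      using elim lamk[OF k] N_pos[OF k] by (intro mult_left_mono) auto
    moreover have "mu k * (2 * e1) + lam k * Nk k * e1 = e1 * (2 * mu k + lam k * Nk k)" by (simp add: algebra_simps)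
    moreover have "e1 * (2 * mu k + lam k * Nk k) \<le> e"
    proof -
      have "e1 * (2 * mu k + lam k * Nk k) \<le> e1 * (2 * mu k + lam k * Nk k + 1)" using e1 by simp
      also have "\<dots> = e" using m by (simp add: e1_def)
      finally show ?thesis .
    qed
    ultimately show ?case by linarith
  qed
next
  fix t :: real assume t: "t \<ge> 0"
  show "((\<lambda>t. - (V t k - nu k)) has_real_derivative
     - (-(mu k + d + omega) * (V t k - nu k) - (mu k * (I t k + Q t k) + delta * lam k * Th t * V t k))) (at t within {0..})"
    by (rule DERIV_minus[OF dy[OF t k]])
qed (use e in auto)

lemma tendsto_bounds:
  fixes f :: "real \<Rightarrow> real"
  assumes up: "\<And>e. e > 0 \<Longrightarrow> eventually (\<lambda>t. f t \<le> e) at_top"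
    and lo: "\<And>e. e > 0 \<Longrightarrow> eventually (\<lambda>t. - f t \<le> e) at_top"
  shows "(f \<longlongrightarrow> 0) at_top"
proof (rule order_tendstoI)
  fix a :: real assume a: "a < 0"
  have "- a / 2 > 0" using a by simp
  from lo[OF this] have "eventually (\<lambda>t. - f t \<le> - a / 2) at_top" .
  thus "eventually (\<lambda>t. a < f t) at_top" by eventually_elim (use a in auto)
next
  fix a :: real assume a: "0 < a"
  have "a / 2 > 0" using a by simp
  from up[OF this] have "eventually (\<lambda>t. f t \<le> a / 2) at_top" .
  thus "eventually (\<lambda>t. f t < a) at_top" by eventually_elim (use a in auto)
qed

lemma converge: assumes k: "k \<in> {1..n}"
  shows "((\<lambda>t. S t k) \<longlongrightarrow> sig k) at_top \<and> ((\<lambda>t. V t k) \<longlongrightarrow> nu k) at_top \<and>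
         ((\<lambda>t. I t k) \<longlongrightarrow> 0) at_top \<and> ((\<lambda>t. Q t k) \<longlongrightarrow> 0) at_top"
proof (intro conjI)
  have "((\<lambda>t. V t k - nu k) \<longlongrightarrow> 0) at_top"
    by (rule tendsto_bounds) (use y_limsup[OF k] ny_limsup[OF k] in auto)
  thus "((\<lambda>t. V t k) \<longlongrightarrow> nu k) at_top" by (simp add: LIM_zero_iff)
  show "((\<lambda>t. I t k) \<longlongrightarrow> 0) at_top"
  proof (rule tendsto_bounds)
    fix e :: real assume e: "e > 0"
    show "eventually (\<lambda>t. - I t k \<le> e) at_top" using ev_ge0 by eventually_elim (use I_nonneg[OF _ k] e in force)
  qed (use I_limsup[OF k] in auto)
  show "((\<lambda>t. Q t k) \<longlongrightarrow> 0) at_top"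
  proof (rule tendsto_bounds)
    fix e :: real assume e: "e > 0"
    show "eventually (\<lambda>t. - Q t k \<le> e) at_top" using ev_ge0 by eventually_elim (use Q_nonneg[OF _ k] e in force)
  qed (use Q_limsup[OF k] in auto)
  have "((\<lambda>t. S t k - sig k) \<longlongrightarrow> 0) at_top"
  proof (rule tendsto_bounds)
    fix e :: real assume e: "e > 0"
    have "eventually (\<lambda>t. t \<ge> 0 \<and> V t k - nu k \<le> e/3 \<and> I t k \<le> e/3 \<and> Q t k \<le> e/3) at_top"
    proof -
      have e3: "e/3 > 0" using e by simp
      show ?thesis using eventually_conj[OF ev_ge0 eventually_conj[OF y_limsup[OF k e3]
          eventually_conj[OF I_limsup[OF k e3] Q_limsup[OF k e3]]]] .
    qed
    thus "eventually (\<lambda>t. - (S t k - sig k) \<le> e) at_top"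
    proof eventually_elim
      case (elim t)
      have "S t k + V t k + I t k + Q t k = sig k + nu k" using tot[OF _ k, of t] sig_nu[OF k] elim by simp
      thus ?case using elim by linarith
    qed
  qed (use x_limsup[OF k] in auto)
  thus "((\<lambda>t. S t k) \<longlongrightarrow> sig k) at_top" by (simp add: LIM_zero_iff)
qed

abbreviation "D0 \<equiv> dist_dfe n sig nu (S 0) (V 0) (I 0) (Q 0)"

lemma init: assumes k: "k \<in> {1..n}"
  shows "\<bar>S 0 k - sig k\<bar> \<le> D0 \<and> \<bar>V 0 k - nu k\<bar> \<le> D0 \<and> I 0 k \<le> D0 \<and> Q 0 k \<le> D0"
proof -
  have "\<bar>S 0 k - sig k\<bar> + \<bar>V 0 k - nu k\<bar> + \<bar>I 0 k\<bar> + \<bar>Q 0 k\<bar> \<le> D0"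
    unfolding dist_dfe_def by (rule member_le_sum) (use k in auto)
  moreover have "\<bar>I 0 k\<bar> = I 0 k" "\<bar>Q 0 k\<bar> = Q 0 k" using adm0[OF k] by auto
  ultimately show ?thesis by auto
qed

lemma D0_nonneg: "D0 \<ge> 0" unfolding dist_dfe_def by (intro sum_nonneg) auto

lemma yb: assumes k: "k \<in> {1..n}" and t: "t \<ge> 0" shows "V t k - nu k \<le> D0"
proof -
  have "V t k - nu k \<le> max (V 0 k - nu k) (0 / (mu k + d + omega))"
  proof (rule lin_bound[of "mu k + d + omega" 0 "\<lambda>s. V s k - nu k"
      "\<lambda>s. -(mu k + d + omega) * (V s k - nu k) - (mu k * (I s k + Q s k) + delta * lam k * Th s * V s k)" 0])
    show "mu k + d + omega > 0" using mden[OF k] by simp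
  next
    fix s :: real assume s: "s \<ge> 0"
    show "-(mu k + d + omega) * (V s k - nu k) - (mu k * (I s k + Q s k) + delta * lam k * Th s * V s k)
        \<le> -(mu k + d + omega) * (V s k - nu k) + 0" using forcing_y_nonneg[OF s k] by linarith
  next
    fix s :: real assume s: "s \<ge> 0"
    show "((\<lambda>s. V s k - nu k) has_real_derivative
       (-(mu k + d + omega) * (V s k - nu k) - (mu k * (I s k + Q s k) + delta * lam k * Th s * V s k))) (at s within {0..})"
      by (rule dy[OF s k])
  qed (use t in simp_all)
  moreover have "max (V 0 k - nu k) (0 / (mu k + d + omega)) \<le> D0"
    using init[OF k] D0_nonneg by (intro max.boundedI) (simp_all add: abs_le_iff)
  ultimately show ?thesis by linarith
qed

lemma xb: assumes k: "k \<in> {1..n}" and t: "t \<ge> 0" shows "S t k - sig k \<le> C1 * D0"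
proof -
  have kp: "mu k + d + gamma > 0" using muk[OF k] bd consts_pos by simp
  have w: "omega - gamma \<ge> 0" using omega_eta eta_gamma by simp
  have "S t k - sig k \<le> max (S 0 k - sig k) ((omega - gamma) * D0 / (mu k + d + gamma))"
  proof (rule lin_bound[OF kp order.refl, of "\<lambda>s. S s k - sig k"
      "\<lambda>s. -(mu k + d + gamma) * (S s k - sig k) + (omega - gamma) * (V s k - nu k) - lam k * S s k * Th s"])
    fix s :: real assume s: "s \<ge> 0"
    have "(omega - gamma) * (V s k - nu k) \<le> (omega - gamma) * D0" using yb[OF k s] w by (rule mult_left_mono)
    moreover have "lam k * S s k * Th s \<ge> 0" using lamk[OF k] S_nonneg[OF s k] Th_nonneg[OF s] by simp
    ultimately show "-(mu k + d + gamma) * (S s k - sig k) + (omega - gamma) * (V s k - nu k) - lam k * S s k * Th s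
       \<le> -(mu k + d + gamma) * (S s k - sig k) + (omega - gamma) * D0" by linarith
  next
    fix s :: real assume s: "s \<ge> 0"
    show "((\<lambda>s. S s k - sig k) has_real_derivative
     (-(mu k + d + gamma) * (S s k - sig k) + (omega - gamma) * (V s k - nu k) - lam k * S s k * Th s))
     (at s within {0..})" by (rule dx[OF s k])
  qed (rule t)
  moreover have "(omega - gamma) * D0 / (mu k + d + gamma) \<le> C1 * D0"
  proof -
    have "(omega - gamma) * D0 / (mu k + d + gamma) \<le> omega * D0 / d"
      using w D0_nonneg kp muk[OF k] consts_pos bd
      by (intro frac_le mult_right_mono) auto
    also have "\<dots> \<le> C1 * D0" using D0_nonneg by (simp add: C1_def field_simps)
    finally show ?thesis .
  qed
  moreover have "S 0 k - sig k \<le> C1 * D0"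
    using init[OF k] C1_ge D0_nonneg mult_right_mono[of 1 C1 D0] by (simp add: abs_le_iff)
  ultimately show ?thesis by linarith
qed

lemma Gb: assumes thr: "D0 \<le> thr" and t: "t \<ge> 0" shows "G t \<le> - rho"
proof -
  have "(\<Sum>i=1..n. phi i * p i * lam i * ((S t i - sig i) + delta * (V t i - nu i)))
      \<le> (\<Sum>i=1..n. phi i * p i * lam i * ((C1 + 1) * D0))"
  proof (rule sum_mono)
    fix i assume i: "i \<in> {1..n}"
    have "delta * (V t i - nu i) \<le> D0"
    proof (cases "V t i - nu i \<ge> 0")
      case True
      hence "delta * (V t i - nu i) \<le> (V t i - nu i)" using mult_right_mono[of delta 1 "V t i - nu i"] delta by simp
      thus ?thesis using yb[OF i t] by linarith
    next
      case False
      hence "delta * (V t i - nu i) \<le> 0" using delta by (simp add: mult_nonneg_nonpos)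
      thus ?thesis using D0_nonneg by simp
    qed
    hence "(S t i - sig i) + delta * (V t i - nu i) \<le> (C1 + 1) * D0" using xb[OF i t] by (simp add: algebra_simps)
    moreover have "phi i * p i * lam i \<ge> 0" using phik[OF i] pk[OF i] lamk[OF i] by simp
    ultimately show "phi i * p i * lam i * ((S t i - sig i) + delta * (V t i - nu i)) \<le> phi i * p i * lam i * ((C1 + 1) * D0)"
      by (rule mult_left_mono)
  qed
  also have "\<dots> = PP * ((C1 + 1) * D0)" unfolding PP_def by (rule sum_distrib_right[symmetric])
  finally have "(1 / KK) * (\<Sum>i=1..n. phi i * p i * lam i * ((S t i - sig i) + delta * (V t i - nu i)))
      \<le> (1 / KK) * (PP * ((C1 + 1) * D0))" using KK_pos by (intro mult_left_mono) auto
  also have "(1 / KK) * (PP * ((C1 + 1) * D0)) = LL * (C1 + 1) * D0" by (simp add: LL_def)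
  also have "\<dots> \<le> LL * (C1 + 1) * thr" using thr LL_pos C1_ge by (intro mult_left_mono) auto
  also have "\<dots> = rho" unfolding thr_def using LL_pos C1_ge by simp
  finally have X: "(1 / KK) * (\<Sum>i=1..n. phi i * p i * lam i * ((S t i - sig i) + delta * (V t i - nu i))) \<le> rho" .
  have "G t \<le> L0 - c + rho" unfolding G_decomp using X by (rule add_left_mono)
  also have "L0 - c + rho = - rho" by (simp add: rho_def field_simps)
  finally show ?thesis .
qed

lemma Thb: assumes thr: "D0 \<le> thr" and t: "t \<ge> 0" shows "Th t \<le> Kth * D0"
proof -
  have "Th t \<le> max (Th 0) (0 / rho)"
  proof (rule lin_bound[OF rho_pos order.refl, of Th "\<lambda>s. G s * Th s"])
    fix s :: real assume s: "s \<ge> 0"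
    have "G s * Th s \<le> (- rho) * Th s" using Gb[OF thr s] Th_nonneg[OF s] by (intro mult_right_mono) auto
    thus "G s * Th s \<le> - rho * Th s + 0" by simp
  next
    fix s :: real assume s: "s \<ge> 0"
    show "(Th has_real_derivative G s * Th s) (at s within {0..})" by (rule dTh[OF s])
  qed (rule t)
  moreover have "Th 0 \<le> Kth * D0"
  proof -
    have "(\<Sum>i=1..n. phi i * p i * I 0 i) \<le> (\<Sum>i=1..n. phi i * p i * D0)"
      by (rule sum_mono, rule mult_left_mono) (use init phik pk in \<open>auto simp: less_imp_le\<close>)
    also have "\<dots> = (\<Sum>i=1..n. phi i * p i) * D0" by (rule sum_distrib_right[symmetric])
    finally show ?thesis unfolding Th_def' Kth_def using KK_pos by (simp add: divide_right_mono)
  qed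
  moreover have "Kth * D0 \<ge> 0" using Kth_nonneg D0_nonneg by simp
  ultimately show ?thesis by linarith
qed

lemma Ib: assumes thr: "D0 \<le> thr" and k: "k \<in> {1..n}" and t: "t \<ge> 0" shows "I t k \<le> CI * D0"
proof -
  have "I t k \<le> max (I 0 k) (lam k * Nk k * (Kth * D0) / c)"
  proof (rule lin_bound[OF c_pos order.refl, of "\<lambda>s. I s k"
     "\<lambda>s. lam k * S s k * Th s + delta * lam k * V s k * Th s - (gamma + beta + d) * I s k"])
    fix s :: real assume s: "s \<ge> 0"
    have "(lam k * Th s) * (S s k + delta * V s k) \<le> (lam k * Th s) * Nk k"
      using SdV_le[OF s k] lamk[OF k] Th_nonneg[OF s] by (intro mult_left_mono) auto
    moreover have "(lam k * Nk k) * Th s \<le> (lam k * Nk k) * (Kth * D0)"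
      using Thb[OF thr s] lamk[OF k] N_nonneg[of k] by (intro mult_left_mono) auto
    ultimately show "lam k * S s k * Th s + delta * lam k * V s k * Th s - (gamma + beta + d) * I s k
        \<le> - c * I s k + lam k * Nk k * (Kth * D0)" by (simp add: algebra_simps)
  next
    fix s :: real assume s: "s \<ge> 0"
    show "((\<lambda>s. I s k) has_real_derivative
      lam k * S s k * Th s + delta * lam k * V s k * Th s - (gamma + beta + d) * I s k) (at s within {0..})"
      by (rule dI[OF s k])
  qed (rule t)
  moreover have "lam k * Nk k * (Kth * D0) / c \<le> CI * D0"
  proof -
    have "lam k * Nk k * (Kth * D0) / c \<le> Lsum * (Kth * D0) / c"
      using lamN_le[OF k] Kth_nonneg D0_nonneg c_pos by (intro divide_right_mono mult_right_mono) auto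
    also have "\<dots> \<le> CI * D0"
    proof -
      have "CI * D0 = D0 + Lsum * (Kth * D0) / c" unfolding CI_def by (simp add: algebra_simps)
      thus ?thesis using D0_nonneg by linarith
    qed
    finally show ?thesis .
  qed
  moreover have "I 0 k \<le> CI * D0" using init[OF k] CI_ge D0_nonneg mult_right_mono[of 1 CI D0] by simp
  ultimately show ?thesis by linarith
qed

lemma Qb: assumes thr: "D0 \<le> thr" and k: "k \<in> {1..n}" and t: "t \<ge> 0" shows "Q t k \<le> CQ * D0"
proof -
  have ed: "eta + d > 0" using consts_pos bd by simp
  have "Q t k \<le> max (Q 0 k) (beta * (CI * D0) / (eta + d))"
  proof (rule lin_bound[OF ed order.refl, of "\<lambda>s. Q s k" "\<lambda>s. beta * I s k - (eta + d) * Q s k"])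
    fix s :: real assume s: "s \<ge> 0"
    have "beta * I s k \<le> beta * (CI * D0)" using Ib[OF thr k s] consts_pos by (intro mult_left_mono) auto
    thus "beta * I s k - (eta + d) * Q s k \<le> - (eta + d) * Q s k + beta * (CI * D0)" by (simp add: algebra_simps)
  next
    fix s :: real assume s: "s \<ge> 0"
    show "((\<lambda>s. Q s k) has_real_derivative beta * I s k - (eta + d) * Q s k) (at s within {0..})"
      by (rule dQ[OF s k])
  qed (rule t)
  moreover have "beta * (CI * D0) / (eta + d) \<le> CQ * D0"
  proof -
    have "beta * (CI * D0) / (eta + d) \<le> beta * (CI * D0) / d"
      using consts_pos CI_ge D0_nonneg bd by (intro divide_left_mono) auto
    also have "\<dots> \<le> CQ * D0"
    proof -
      have "CQ * D0 = D0 + beta * (CI * D0) / d" unfolding CQ_def by (simp add: algebra_simps)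
      thus ?thesis using D0_nonneg by linarith
    qed
    finally show ?thesis .
  qed
  moreover have "Q 0 k \<le> CQ * D0" using init[OF k] CQ_ge D0_nonneg mult_right_mono[of 1 CQ D0] by simp
  ultimately show ?thesis by linarith
qed

lemma nyb: assumes thr: "D0 \<le> thr" and k: "k \<in> {1..n}" and t: "t \<ge> 0" shows "- (V t k - nu k) \<le> C2 * D0"
proof -
  define B where "B = mu k * ((CI + CQ) * D0) + lam k * Nk k * (Kth * D0)"
  have kp: "mu k + d + omega > 0" using mden[OF k] by simp
  have "- (V t k - nu k) \<le> max (- (V 0 k - nu k)) (B / (mu k + d + omega))"
  proof (rule lin_bound[OF kp order.refl, of "\<lambda>s. - (V s k - nu k)"
     "\<lambda>s. - (-(mu k + d + omega) * (V s k - nu k) - (mu k * (I s k + Q s k) + delta * lam k * Th s * V s k))"])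
    fix s :: real assume s: "s \<ge> 0"
    have F: "mu k * (I s k + Q s k) + delta * lam k * Th s * V s k \<le> mu k * (I s k + Q s k) + lam k * Nk k * Th s"
      by (rule forcing_y_le[OF s k])
    have "mu k * (I s k + Q s k) \<le> mu k * ((CI + CQ) * D0)"
      using Ib[OF thr k s] Qb[OF thr k s] muk[OF k] by (intro mult_left_mono) (auto simp: algebra_simps)
    moreover have "lam k * Nk k * Th s \<le> lam k * Nk k * (Kth * D0)"
      using Thb[OF thr s] lamk[OF k] N_nonneg[of k] by (intro mult_left_mono) auto
    ultimately have "mu k * (I s k + Q s k) + delta * lam k * Th s * V s k \<le> B" using F unfolding B_def by linarith
    moreover have "- (-(mu k + d + omega) * (V s k - nu k) - (mu k * (I s k + Q s k) + delta * lam k * Th s * V s k))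
       = (mu k + d + omega) * (V s k - nu k) + (mu k * (I s k + Q s k) + delta * lam k * Th s * V s k)"
      by (simp add: algebra_simps)
    moreover have "- (mu k + d + omega) * (- (V s k - nu k)) + B = (mu k + d + omega) * (V s k - nu k) + B"
      by (simp add: algebra_simps)
    ultimately show "- (-(mu k + d + omega) * (V s k - nu k) - (mu k * (I s k + Q s k) + delta * lam k * Th s * V s k))
       \<le> - (mu k + d + omega) * (- (V s k - nu k)) + B" by linarith
  next
    fix s :: real assume s: "s \<ge> 0"
    show "((\<lambda>s. - (V s k - nu k)) has_real_derivative
     - (-(mu k + d + omega) * (V s k - nu k) - (mu k * (I s k + Q s k) + delta * lam k * Th s * V s k))) (at s within {0..})"
      by (rule DERIV_minus[OF dy[OF s k]])
  qed (rule t)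
  moreover have "B / (mu k + d + omega) \<le> C2 * D0"
  proof -
    have B0: "B \<ge> 0" unfolding B_def using muk[OF k] lamk[OF k] N_nonneg[of k] CI_ge CQ_ge Kth_nonneg D0_nonneg
      by (intro add_nonneg_nonneg mult_nonneg_nonneg) auto
    have "B / (mu k + d + omega) \<le> B / d" using B0 bd muk[OF k] consts_pos by (intro divide_left_mono) auto
    also have "B \<le> (Msum * (CI + CQ) + Lsum * Kth) * D0"
    proof -
      have "mu k * ((CI + CQ) * D0) \<le> Msum * ((CI + CQ) * D0)"
        using mu_le[OF k] CI_ge CQ_ge D0_nonneg by (intro mult_right_mono) auto
      moreover have "lam k * Nk k * (Kth * D0) \<le> Lsum * (Kth * D0)"
        using lamN_le[OF k] Kth_nonneg D0_nonneg by (intro mult_right_mono) auto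
      ultimately show ?thesis unfolding B_def by (simp add: algebra_simps)
    qed
    hence "B / d \<le> (Msum * (CI + CQ) + Lsum * Kth) * D0 / d" using bd by (intro divide_right_mono) auto
    also have "\<dots> \<le> C2 * D0"
    proof -
      have "C2 * D0 = D0 + (Msum * (CI + CQ) + Lsum * Kth) * D0 / d" unfolding C2_def by (simp add: algebra_simps)
      thus ?thesis using D0_nonneg by linarith
    qed
    finally show ?thesis .
  qed
  moreover have "- (V 0 k - nu k) \<le> C2 * D0"
    using init[OF k] C2_ge D0_nonneg mult_right_mono[of 1 C2 D0] by (simp add: abs_le_iff)
  ultimately show ?thesis by linarith
qed

lemma summand_b: assumes thr: "D0 \<le> thr" and t: "t \<ge> 0" and k: "k \<in> {1..n}"
  shows "\<bar>S t k - sig k\<bar> + \<bar>V t k - nu k\<bar> + \<bar>I t k\<bar> + \<bar>Q t k\<bar> \<le> 2 * (C2 + CI + CQ) * D0"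
proof -
    have y1: "V t k - nu k \<le> C2 * D0" using yb[OF k t] C2_ge D0_nonneg mult_right_mono[of 1 C2 D0] by simp
    have y2: "- (V t k - nu k) \<le> C2 * D0" by (rule nyb[OF thr k t])
    have ay: "\<bar>V t k - nu k\<bar> \<le> C2 * D0" using y1 y2 by (simp add: abs_le_iff)
    have i1: "I t k \<le> CI * D0" "I t k \<ge> 0" using Ib[OF thr k t] I_nonneg[OF t k] by auto
    have q1: "Q t k \<le> CQ * D0" "Q t k \<ge> 0" using Qb[OF thr k t] Q_nonneg[OF t k] by auto
    have xe: "S t k - sig k = - (V t k - nu k) - I t k - Q t k" using tot[OF t k] sig_nu[OF k] by simp
    have e: "(C2 + CI + CQ) * D0 = C2 * D0 + CI * D0 + CQ * D0" by (simp add: algebra_simps)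
    have ax: "\<bar>S t k - sig k\<bar> \<le> (C2 + CI + CQ) * D0" unfolding xe e using ay i1 q1 by linarith
    have e2: "2 * (C2 + CI + CQ) * D0 = 2 * (C2 * D0) + 2 * (CI * D0) + 2 * (CQ * D0)" by (simp add: algebra_simps)
    show ?thesis unfolding e2 using ax ay i1 q1 e by simp
qed

lemma distb: assumes thr: "D0 \<le> thr" and t: "t \<ge> 0"
  shows "dist_dfe n sig nu (S t) (V t) (I t) (Q t) \<le> Ctot * D0"
proof -
  have "dist_dfe n sig nu (S t) (V t) (I t) (Q t) \<le> of_nat (card {1..n}) * (2 * (C2 + CI + CQ) * D0)"
    unfolding dist_dfe_def[of _ _ _ "S t"] by (rule sum_bounded_above) (rule summand_b[OF thr t])
  thus ?thesis unfolding Ctot_def by (simp add: algebra_simps)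
qed

end

theorem theorem4p8:
  fixes n :: nat and p :: "nat \<Rightarrow> real" and b d Phi :: real
    and lam phi mu :: "nat \<Rightarrow> real" and beta gamma eta omega delta :: real
  assumes n: "n \<ge> 1"
    and p_pos: "\<forall>k\<in>{1..n}. p k > 0"
    and p_sum: "(\<Sum>k=1..n. p k) = 1"
    and bd: "b > d" "d > 0"
    and Phi_pos: "Phi > 0"
    and Phi_eq: "Phi = (1 / avg_deg n p) * (\<Sum>i=1..n. real i * p i * b * Phi / (d + b * real i * Phi))"
    and lam_pos: "\<forall>k\<in>{1..n}. lam k > 0"
    and phi_pos: "\<forall>k\<in>{1..n}. phi k > 0"
    and mu_pos: "\<forall>k\<in>{1..n}. mu k > 0"
    and consts_pos: "beta > 0" "gamma > 0" "eta > 0" "omega > 0"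
    and delta: "0 \<le> delta" "delta \<le> 1"
    and omega_eta: "omega \<ge> eta" and eta_gamma: "eta = gamma"
    and R0_lt: "R0 n p b d Phi lam phi mu beta gamma omega delta < 1"
  shows
    \<comment> \<open>Lyapunov stability (for solutions starting in the admissible region)\<close>
    "(\<forall>\<epsilon>>0. \<exists>\<delta>'>0. \<forall>S V I Q.
        sviqs_solution n p b d Phi lam phi mu beta gamma eta omega delta S V I Q \<and>
        sviqs_admissible n (Nstar b d Phi) (S 0) (V 0) (I 0) (Q 0) \<and>
        dist_dfe n (S0 b d Phi mu omega) (V0 b d Phi mu omega) (S 0) (V 0) (I 0) (Q 0) < \<delta>'
        \<longrightarrow> (\<forall>t\<ge>0. dist_dfe n (S0 b d Phi mu omega) (V0 b d Phi mu omega) (S t) (V t) (I t) (Q t) < \<epsilon>))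
     \<and>
    \<comment> \<open>global attractivity\<close>
     (\<forall>S V I Q.
        sviqs_solution n p b d Phi lam phi mu beta gamma eta omega delta S V I Q \<and>
        sviqs_admissible n (Nstar b d Phi) (S 0) (V 0) (I 0) (Q 0)
        \<longrightarrow> (\<forall>k\<in>{1..n}.
              ((\<lambda>t. S t k) \<longlongrightarrow> S0 b d Phi mu omega k) at_top \<and>
              ((\<lambda>t. V t k) \<longlongrightarrow> V0 b d Phi mu omega k) at_top \<and>
              ((\<lambda>t. I t k) \<longlongrightarrow> 0) at_top \<and>
              ((\<lambda>t. Q t k) \<longlongrightarrow> 0) at_top))"
proof -
  interpret P: params n p b d Phi lam phi mu beta gamma eta omega delta
    by (unfold_locales) (use assms in auto)
  have mk: "sol n p b d Phi lam phi mu beta gamma eta omega delta S V I Q"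
    if "sviqs_solution n p b d Phi lam phi mu beta gamma eta omega delta S V I Q"
       "sviqs_admissible n (Nstar b d Phi) (S 0) (V 0) (I 0) (Q 0)" for S V I Q
    by (intro sol.intro P.params_axioms sol_axioms.intro that)
  have part1: "\<forall>\<epsilon>>0. \<exists>\<delta>'>0. \<forall>S V I Q.
        sviqs_solution n p b d Phi lam phi mu beta gamma eta omega delta S V I Q \<and>
        sviqs_admissible n (Nstar b d Phi) (S 0) (V 0) (I 0) (Q 0) \<and>
        dist_dfe n (S0 b d Phi mu omega) (V0 b d Phi mu omega) (S 0) (V 0) (I 0) (Q 0) < \<delta>'
        \<longrightarrow> (\<forall>t\<ge>0. dist_dfe n (S0 b d Phi mu omega) (V0 b d Phi mu omega) (S t) (V t) (I t) (Q t) < \<epsilon>)"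
  proof (intro allI impI)
    fix \<epsilon> :: real assume e: "\<epsilon> > 0"
    define dd where "dd = min P.thr (\<epsilon> / (P.Ctot + 1))"
    have C: "P.Ctot \<ge> 0" by (rule P.Ctot_nonneg)
    show "\<exists>\<delta>'>0. \<forall>S V I Q.
        sviqs_solution n p b d Phi lam phi mu beta gamma eta omega delta S V I Q \<and>
        sviqs_admissible n (Nstar b d Phi) (S 0) (V 0) (I 0) (Q 0) \<and>
        dist_dfe n (S0 b d Phi mu omega) (V0 b d Phi mu omega) (S 0) (V 0) (I 0) (Q 0) < \<delta>'
        \<longrightarrow> (\<forall>t\<ge>0. dist_dfe n (S0 b d Phi mu omega) (V0 b d Phi mu omega) (S t) (V t) (I t) (Q t) < \<epsilon>)"
    proof (rule exI[of _ dd], intro conjI allI impI)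
      show "dd > 0" using P.thr_pos e C by (simp add: dd_def)
      fix S V I Q and t :: real
      assume H: "sviqs_solution n p b d Phi lam phi mu beta gamma eta omega delta S V I Q \<and>
        sviqs_admissible n (Nstar b d Phi) (S 0) (V 0) (I 0) (Q 0) \<and>
        dist_dfe n (S0 b d Phi mu omega) (V0 b d Phi mu omega) (S 0) (V 0) (I 0) (Q 0) < dd"
        and t: "t \<ge> 0"
      interpret Z: sol n p b d Phi lam phi mu beta gamma eta omega delta S V I Q
        using mk H by blast
      have D: "Z.D0 < dd" using H by simp
      have thr: "Z.D0 \<le> P.thr" using D by (simp add: dd_def)
      have "dist_dfe n (S0 b d Phi mu omega) (V0 b d Phi mu omega) (S t) (V t) (I t) (Q t) \<le> P.Ctot * Z.D0"
        by (rule Z.distb[OF thr t])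
      also have "\<dots> \<le> P.Ctot * (\<epsilon> / (P.Ctot + 1))"
        using D C Z.D0_nonneg by (intro mult_left_mono) (auto simp: dd_def)
      also have "\<dots> < \<epsilon>" using C e by (simp add: field_simps)
      finally show "dist_dfe n (S0 b d Phi mu omega) (V0 b d Phi mu omega) (S t) (V t) (I t) (Q t) < \<epsilon>" .
    qed
  qed
  have part2: "\<forall>S V I Q.
        sviqs_solution n p b d Phi lam phi mu beta gamma eta omega delta S V I Q \<and>
        sviqs_admissible n (Nstar b d Phi) (S 0) (V 0) (I 0) (Q 0)
        \<longrightarrow> (\<forall>k\<in>{1..n}.
              ((\<lambda>t. S t k) \<longlongrightarrow> S0 b d Phi mu omega k) at_top \<and>
              ((\<lambda>t. V t k) \<longlongrightarrow> V0 b d Phi mu omega k) at_top \<and>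
              ((\<lambda>t. I t k) \<longlongrightarrow> 0) at_top \<and>
              ((\<lambda>t. Q t k) \<longlongrightarrow> 0) at_top)"
  proof (intro allI impI ballI)
    fix S V I Q k
    assume H: "sviqs_solution n p b d Phi lam phi mu beta gamma eta omega delta S V I Q \<and>
        sviqs_admissible n (Nstar b d Phi) (S 0) (V 0) (I 0) (Q 0)" and k: "k \<in> {1..n}"
    interpret Z: sol n p b d Phi lam phi mu beta gamma eta omega delta S V I Q
      using mk H by blast
    show "((\<lambda>t. S t k) \<longlongrightarrow> S0 b d Phi mu omega k) at_top \<and>
              ((\<lambda>t. V t k) \<longlongrightarrow> V0 b d Phi mu omega k) at_top \<and>
              ((\<lambda>t. I t k) \<longlongrightarrow> 0) at_top \<and>
              ((\<lambda>t. Q t k) \<longlongrightarrow> 0) at_top" by (rule Z.converge[OF k])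
  qed
  show ?thesis using part1 part2 by blast
qed

end
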